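(* Let $p$ be a prime and $n\ge 1$. A $C_{p^n}$-transfer system $T$ is lesser simply paired if and only if either $T$ is connected, or $T$ has exactly two connected components and the connected component of the trivial subgroup consists of the trivial subgroup alone. Consequently the number of lesser simply paired $C_{p^n}$-transfer systems is $\mathrm{Cat}(n)+\mathrm{Cat}(n-1)=\frac{(5n-1)(2n-2)!}{(n-1)!(n+1)!}$, where $\mathrm{Cat}(m)=\frac{(2m)!}{(m+1)!m!}$, and their proportion among all $C_{p^n}$-transfer systems is $\frac{5n^2+9n-2}{16n^2-4}$.
   Context: The subgroups of $C_{p^n}$ are $C_{p^i}$, $0\le i\le n$, totally ordered by inclusion. A $C_{p^n}$-transfer system is a partial order $\to$ on these subgroups refining inclusion ($K\to H$ implies $K\le H$), reflexive, transitive, and closed under restriction ($K\to H$ implies $K\cap L\to H\cap L$ for all $L$). The total number of $C_{p^n}$-transfer systems is $\mathrm{Cat}(n+1)$. Connected components are those of the underlying undirected graph. A transfer system is saturated if whenever $L\le K\le H$ and $L\to H$ is in it then $K\to H$ is in it; $\mathrm{Hull}(T)$ is the smallest saturated transfer system containing $T$; $T_c$ is the complete transfer system. A pair $(T,T')$ is compatible if $T\subseteq T'$ and for all subgroups $A,B,C$ with $B,C\le A$: if $B\to A$ is in $T$ and $B\cap C\to B$ is in $T'$ then $C\to A$ is in $T'$. $T$ is lesser simply paired if for every transfer system $T'\supseteq T$, $(T,T')$ is compatible iff $T'\in\{\mathrm{Hull}(T),T_c\}$. *)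

theory Defs
  imports Complex_Main "HOL-Computational_Algebra.Primes"
begin

text \<open>The subgroups of the cyclic group C_{p^n} are C_{p^i}, 0 <= i <= n, totally ordered
by inclusion. We represent the subgroup C_{p^i} by its index i in {0..n}; inclusion becomes
the order on nat and intersection becomes min. A relation on subgroups is a set of pairs
(K,H) meaning K -> H.\<close>

definition subgrps :: "nat \<Rightarrow> nat set" where
  "subgrps n = {0..n}"

definition transfer_system :: "nat \<Rightarrow> (nat \<times> nat) set \<Rightarrow> bool" where
  "transfer_system n T \<longleftrightarrow>
     T \<subseteq> subgrps n \<times> subgrps n \<and>
     (\<forall>K H. (K, H) \<in> T \<longrightarrow> K \<le> H) \<and>
     (\<forall>K \<in> subgrps n. (K, K) \<in> T) \<and>
     (\<forall>K H L. (K, H) \<in> T \<longrightarrow> (H, L) \<in> T \<longrightarrow> (K, L) \<in> T) \<and>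
     (\<forall>K H L. (K, H) \<in> T \<longrightarrow> L \<in> subgrps n \<longrightarrow> (min K L, min H L) \<in> T)"

definition components :: "nat \<Rightarrow> (nat \<times> nat) set \<Rightarrow> nat set set" where
  "components n T = subgrps n // ((T \<union> T\<inverse>)\<^sup>* \<inter> (subgrps n \<times> subgrps n))"

definition component_of :: "nat \<Rightarrow> (nat \<times> nat) set \<Rightarrow> nat \<Rightarrow> nat set" where
  "component_of n T x = {y \<in> subgrps n. (x, y) \<in> (T \<union> T\<inverse>)\<^sup>*}"

definition connected_ts :: "nat \<Rightarrow> (nat \<times> nat) set \<Rightarrow> bool" where
  "connected_ts n T \<longleftrightarrow> card (components n T) = 1"

definition saturated :: "nat \<Rightarrow> (nat \<times> nat) set \<Rightarrow> bool" where
  "saturated n T \<longleftrightarrow>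
     (\<forall>L K H. L \<le> K \<longrightarrow> K \<le> H \<longrightarrow> (L, H) \<in> T \<longrightarrow> (K, H) \<in> T)"

definition Hull :: "nat \<Rightarrow> (nat \<times> nat) set \<Rightarrow> (nat \<times> nat) set" where
  "Hull n T = \<Inter> {T'. transfer_system n T' \<and> saturated n T' \<and> T \<subseteq> T'}"

definition complete_ts :: "nat \<Rightarrow> (nat \<times> nat) set" where
  "complete_ts n = {(K, H). K \<le> H \<and> H \<le> n}"

definition compatible :: "nat \<Rightarrow> (nat \<times> nat) set \<Rightarrow> (nat \<times> nat) set \<Rightarrow> bool" where
  "compatible n T T' \<longleftrightarrow> T \<subseteq> T' \<and>
     (\<forall>A \<in> subgrps n. \<forall>B \<in> subgrps n. \<forall>C \<in> subgrps n. B \<le> A \<longrightarrow> C \<le> A \<longrightarrow>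
        (B, A) \<in> T \<longrightarrow> (min B C, B) \<in> T' \<longrightarrow> (C, A) \<in> T')"

definition lesser_simply_paired :: "nat \<Rightarrow> (nat \<times> nat) set \<Rightarrow> bool" where
  "lesser_simply_paired n T \<longleftrightarrow>
     (\<forall>T'. transfer_system n T' \<longrightarrow> T \<subseteq> T' \<longrightarrow>
        (compatible n T T' \<longleftrightarrow> T' = Hull n T \<or> T' = complete_ts n))"

definition catalan :: "nat \<Rightarrow> nat" where
  "catalan m = fact (2 * m) div (fact (m + 1) * fact m)"

end

theory Submission
  imports Defs "HOL-Computational_Algebra.Formal_Power_Series"
begin


definition cr :: "nat \<Rightarrow> real" where
  "cr k = real (fact (2*k)) / (real (fact (k+1)) * real (fact k))"

lemma catalan_real: "real (catalan k) = cr k"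
proof -
  define C where "C = (2*k choose k)"
  define D where "D = (2*k choose Suc k)"
  have e1: "Suc k * D = k * C"
  proof (cases k)
    case 0 then show ?thesis by (simp add: C_def D_def)
  next
    case (Suc m)
    have "Suc k * (Suc (k + m) choose Suc k) = Suc m * (Suc (k + m) choose k)"
      by (rule Suc_times_binomial_add)
    moreover have h2: "2*k = Suc (k+m)" using Suc by simp
    moreover have h3: "Suc m = k" using Suc by simp
    ultimately show ?thesis unfolding C_def D_def by metis
  qed
  have "Suc k * D \<le> Suc k * C" using e1 by simp
  then have "D \<le> C" using mult_le_cancel1[of "Suc k" D C] by simp
  define d where "d = C - D"
  have dC: "d * Suc k = C" using e1 \<open>D \<le> C\<close> unfolding d_def
    by (simp add: diff_mult_distrib algebra_simps)
  have fC: "fact k * fact k * C = (fact (2*k) :: nat)"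
    using binomial_fact_lemma[of k "2*k"] by (simp add: C_def mult_2)
  have "fact (2*k) = fact k * fact k * (d * Suc k)" using fC dC by simp
  also have "\<dots> = d * (Suc k * fact k * fact k)" by (simp only: mult_ac)
  also have "\<dots> = d * (fact (k+1) * fact k :: nat)" by simp
  finally have ff: "fact (2*k) = d * (fact (k+1) * fact k :: nat)" .
  have pos: "(fact (k+1) * fact k :: nat) > 0" by simp
  have "catalan k = d" unfolding catalan_def ff using pos by simp
  have r: "real (fact (2*k)) = real d * (real (fact (k+1)) * real (fact k))"
    using ff by (metis of_nat_mult)
  have p: "real (fact (k+1)) * real (fact k) \<noteq> 0"
    by (metis of_nat_0_less_iff pos of_nat_mult less_irrefl)
  have "cr k = real d" unfolding cr_def r using p by (simp del: of_nat_fact)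
  then show ?thesis using \<open>catalan k = d\<close> by simp
qed

definition ss :: "nat \<Rightarrow> real" where
  "ss k = ((1/2::real) gchoose k) * (-4) ^ k"

lemma gch_step: "of_nat (Suc k) * (a gchoose Suc k) = (a - of_nat k) * (a gchoose k)"
  for a :: real
  using gbinomial_mult_1[of a k] by (simp add: algebra_simps)

lemma cr_Suc: "cr (Suc k) = cr k * (2 * (2 * real k + 1)) / (real k + 2)"
proof -
  have f1: "real (fact (2 * Suc k)) = (2*real k+2)*(2*real k+1)* real (fact (2*k))"
  proof -
    have e: "2 * Suc k = Suc (Suc (2*k))" by simp
    have "(fact (2 * Suc k) :: nat) = Suc (Suc (2*k)) * (Suc (2*k) * fact (2*k))"
      by (simp only: e fact_Suc of_nat_id)
    then show ?thesis by (simp add: algebra_simps)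
  qed
  have f2: "real (fact (Suc k + 1)) = (real k + 2) * real (fact (k+1))"
    by (simp add: algebra_simps)
  have f3: "real (fact (Suc k)) = (real k + 1) * real (fact k)" by (simp add: algebra_simps)
  have p1: "real (fact (k+1)) > 0" "real (fact k) > 0" by (simp_all only: of_nat_0_less_iff fact_gt_zero)
  have key: "\<And>A B C x::real. B = (x+1)*C \<Longrightarrow> C > 0 \<Longrightarrow> x \<ge> 0 \<Longrightarrow>
     (2*x+2)*(2*x+1)*A / ((x+2)*B * B) = A/(B*C) * (2*(2*x+1))/(x+2)"
  proof -
    fix A B C x :: real
    assume h: "B = (x+1)*C" "C > 0" "x \<ge> 0"
    have nz1: "(x+2)*B*B \<noteq> 0" using h by simp
    have nz2: "B*C*(x+2) \<noteq> 0" using h by simp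
    have e: "A/(B*C) * (2*(2*x+1))/(x+2) = (A*(2*(2*x+1)))/(B*C*(x+2))" by simp
    show "(2*x+2)*(2*x+1)*A / ((x+2)*B * B) = A/(B*C) * (2*(2*x+1))/(x+2)"
      unfolding e frac_eq_eq[OF nz1 nz2] unfolding h(1) by algebra
  qed
  have "cr (Suc k) = (2*real k+2)*(2*real k+1)*real (fact (2*k)) / ((real k+2)*real (fact (k+1)) * real (fact (k+1)))"
    unfolding cr_def f1 f2 by simp
  also have "\<dots> = real (fact (2*k)) / (real (fact (k+1)) * real (fact k)) * (2*(2*real k+1))/(real k+2)"
    by (rule key) (use f3 p1 in auto)
  finally show ?thesis unfolding cr_def by simp
qed

lemma ss_Suc: "ss (Suc k) = - 2 * cr k"
proof (induction k)
  case 0 then show ?case by (simp add: ss_def cr_def)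
next
  case (Suc k)
  define g1 where "g1 = ((1/2::real) gchoose Suc k)"
  define g2 where "g2 = ((1/2::real) gchoose Suc (Suc k))"
  have st: "real (Suc (Suc k)) * g2 = (1/2 - real (Suc k)) * g1"
    unfolding g1_def g2_def by (rule gch_step)
  have "ss (Suc (Suc k)) * real (Suc (Suc k)) = (real (Suc (Suc k)) * g2) * (-4)^(Suc (Suc k))"
    unfolding ss_def g2_def by (simp add: algebra_simps)
  also have "\<dots> = ((1/2 - real (Suc k)) * g1) * (-4)^(Suc (Suc k))" by (simp only: st)
  also have "\<dots> = ss (Suc k) * ((1/2 - real (Suc k)) * (-4))"
    unfolding ss_def g1_def by (simp add: algebra_simps)
  also have "\<dots> = (-2 * cr k) * ((1/2 - real (Suc k)) * (-4))" using Suc by simp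
  finally have e: "ss (Suc (Suc k)) * real (Suc (Suc k)) = (-2 * cr k) * ((1/2 - real (Suc k)) * (-4))" .
  have "ss (Suc (Suc k)) = (-2 * cr k) * ((1/2 - real (Suc k)) * (-4)) / real (Suc (Suc k))"
    using e by (simp add: field_simps)
  then show ?case by (simp add: cr_Suc field_simps)
qed

lemma ss_0: "ss 0 = 1" by (simp add: ss_def)

lemma ss_conv: "(\<Sum>i=0..n. ss i * ss (n - i)) = (-4)^n * (1 gchoose n)"
proof -
  have "(\<Sum>i=0..n. ss i * ss (n - i)) = (\<Sum>i=0..n. (-4)^n * (((1/2::real) gchoose i) * ((1/2) gchoose (n-i))))"
    unfolding ss_def by (rule sum.cong) (auto simp: power_add[symmetric])
  also have "\<dots> = (-4)^n * (\<Sum>i=0..n. ((1/2::real) gchoose i) * ((1/2) gchoose (n-i)))"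
    by (simp add: sum_distrib_left)
  also have "\<dots> = (-4)^n * (1 gchoose n)"
    using gbinomial_Vandermonde[of "1/2::real" "1/2" n] by simp
  finally show ?thesis .
qed

lemma cr_conv: "cr (Suc k) = (\<Sum>j=0..k. cr j * cr (k - j))"
proof -
  have g: "((1::real) gchoose Suc (Suc k)) = 0"
    using binomial_gbinomial[of 1 "Suc (Suc k)", where 'a=real] by simp
  have z: "(\<Sum>i=0..Suc (Suc k). ss i * ss (Suc (Suc k) - i)) = 0"
    using ss_conv[of "Suc (Suc k)"] g by simp
  have "(\<Sum>i=0..Suc (Suc k). ss i * ss (Suc (Suc k) - i))
      = ss 0 * ss (Suc (Suc k)) + (\<Sum>i=0..Suc k. ss (Suc i) * ss (Suc k - i))"
    by (subst sum.atLeast0_atMost_Suc_shift) simp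
  also have "(\<Sum>i=0..Suc k. ss (Suc i) * ss (Suc k - i))
      = (\<Sum>i=0..k. ss (Suc i) * ss (Suc k - i)) + ss (Suc (Suc k)) * ss 0"
    by (subst sum.atLeast0_atMost_Suc) simp
  also have "(\<Sum>i=0..k. ss (Suc i) * ss (Suc k - i)) = (\<Sum>i=0..k. 4 * (cr i * cr (k - i)))"
    by (rule sum.cong) (auto simp: ss_Suc Suc_diff_le)
  finally have "0 = 2 * ss (Suc (Suc k)) + 4 * (\<Sum>i=0..k. cr i * cr (k - i))"
    using z by (simp add: ss_0 sum_distrib_left)
  then show ?thesis by (simp add: ss_Suc)
qed

lemma catalan_conv: "catalan (Suc k) = (\<Sum>j=0..k. catalan j * catalan (k - j))"
proof -
  have "real (catalan (Suc k)) = cr (Suc k)" by (rule catalan_real)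
  also have "\<dots> = (\<Sum>j=0..k. cr j * cr (k - j))" by (rule cr_conv)
  also have "\<dots> = real (\<Sum>j=0..k. catalan j * catalan (k - j))"
    by (simp only: of_nat_sum of_nat_mult catalan_real)
  finally have "real (catalan (Suc k)) = real (\<Sum>j=0..k. catalan j * catalan (k - j))" .
  then show ?thesis by (simp only: of_nat_eq_iff)
qed

lemma catalan_0: "catalan 0 = 1" by (simp add: catalan_def)


definition tsR :: "nat \<Rightarrow> nat \<Rightarrow> (nat \<times> nat) set \<Rightarrow> bool" where
  "tsR a m T \<longleftrightarrow> T \<subseteq> {a..<a+m} \<times> {a..<a+m} \<and> (\<forall>K H. (K,H)\<in>T \<longrightarrow> K \<le> H) \<and>
     (\<forall>K. a \<le> K \<longrightarrow> K < a+m \<longrightarrow> (K,K)\<in>T) \<and>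
     (\<forall>K H L. (K,H)\<in>T \<longrightarrow> (H,L)\<in>T \<longrightarrow> (K,L)\<in>T) \<and>
     (\<forall>K H L. (K,H)\<in>T \<longrightarrow> K \<le> L \<longrightarrow> L \<le> H \<longrightarrow> (K,L)\<in>T)"

lemma tsR_sub: "tsR a m T \<Longrightarrow> T \<subseteq> {a..<a+m} \<times> {a..<a+m}"
  unfolding tsR_def by (elim conjE)
lemma tsR_le: "tsR a m T \<Longrightarrow> (K,H)\<in>T \<Longrightarrow> K \<le> H"
  unfolding tsR_def by (elim conjE) blast
lemma tsR_refl: "tsR a m T \<Longrightarrow> a \<le> K \<Longrightarrow> K < a+m \<Longrightarrow> (K,K)\<in>T"
  unfolding tsR_def by (elim conjE) blast
lemma tsR_trans: "tsR a m T \<Longrightarrow> (K,H)\<in>T \<Longrightarrow> (H,L)\<in>T \<Longrightarrow> (K,L)\<in>T"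
  unfolding tsR_def by (elim conjE) blast
lemma tsR_down: "tsR a m T \<Longrightarrow> (K,H)\<in>T \<Longrightarrow> K \<le> L \<Longrightarrow> L \<le> H \<Longrightarrow> (K,L)\<in>T"
  unfolding tsR_def by (elim conjE) blast
lemma tsR_mem: "tsR a m T \<Longrightarrow> (K,H)\<in>T \<Longrightarrow> a \<le> K \<and> K < a+m \<and> a \<le> H \<and> H < a+m"
  using tsR_sub by fastforce
lemma tsR_I:
  assumes "T \<subseteq> {a..<a+m} \<times> {a..<a+m}" "\<And>K H. (K,H)\<in>T \<Longrightarrow> K \<le> H"
   "\<And>K. a \<le> K \<Longrightarrow> K < a+m \<Longrightarrow> (K,K)\<in>T"
   "\<And>K H L. (K,H)\<in>T \<Longrightarrow> (H,L)\<in>T \<Longrightarrow> (K,L)\<in>T"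
   "\<And>K H L. (K,H)\<in>T \<Longrightarrow> K \<le> L \<Longrightarrow> L \<le> H \<Longrightarrow> (K,L)\<in>T"
  shows "tsR a m T"
  unfolding tsR_def using assms by blast

lemma ts_sub: "transfer_system n T \<Longrightarrow> (K,H) \<in> T \<Longrightarrow> K \<le> n \<and> H \<le> n"
  unfolding transfer_system_def subgrps_def by auto
lemma ts_le: "transfer_system n T \<Longrightarrow> (K,H) \<in> T \<Longrightarrow> K \<le> H"
  unfolding transfer_system_def by (elim conjE) blast
lemma ts_refl: "transfer_system n T \<Longrightarrow> K \<le> n \<Longrightarrow> (K,K) \<in> T"
  unfolding transfer_system_def subgrps_def by simp
lemma ts_trans: "transfer_system n T \<Longrightarrow> (K,H) \<in> T \<Longrightarrow> (H,L) \<in> T \<Longrightarrow> (K,L) \<in> T"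
  unfolding transfer_system_def by (elim conjE) blast
lemma ts_rs: "transfer_system n T \<Longrightarrow> (K,H) \<in> T \<Longrightarrow> L \<le> n \<Longrightarrow> (min K L, min H L) \<in> T"
  unfolding transfer_system_def subgrps_def by simp
lemma ts_down:
  assumes ts: "transfer_system n T" and h: "(K,H)\<in>T" "K \<le> L" "L \<le> H"
  shows "(K,L)\<in>T"
proof -
  have "L \<le> n" using ts_sub[OF ts h(1)] h by simp
  then have "(min K L, min H L) \<in> T" by (rule ts_rs[OF ts h(1)])
  moreover have "min K L = K" "min H L = L" using h by (simp_all add: min_def)
  ultimately show ?thesis by simp
qed
lemma ts_I:
  assumes "\<And>K H. (K,H)\<in>T \<Longrightarrow> K \<le> H \<and> H \<le> n"
   "\<And>K. K \<le> n \<Longrightarrow> (K,K)\<in>T"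
   "\<And>K H L. (K,H)\<in>T \<Longrightarrow> (H,L)\<in>T \<Longrightarrow> (K,L)\<in>T"
   "\<And>K H L. (K,H)\<in>T \<Longrightarrow> K \<le> L \<Longrightarrow> L \<le> H \<Longrightarrow> (K,L)\<in>T"
  shows "transfer_system n T"
proof -
  have rs: "(min K L, min H L) \<in> T" if "(K,H)\<in>T" "L \<le> n" for K H L
  proof (cases "L \<le> K")
    case True
    then have "L \<le> H" using assms(1)[OF that(1)] by simp
    then show ?thesis using True assms(2)[of L] that by (simp add: min_def)
  next
    case False
    show ?thesis
    proof (cases "L \<le> H")
      case True then show ?thesis using False assms(4)[OF that(1), of L] that by (simp add: min_def)
    next
      case F2: False then show ?thesis using False that(1) assms(1)[OF that(1)] by (simp add: min_def)
    qed
  qed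
  have s: "T \<subseteq> {0..n} \<times> {0..n}"
  proof
    fix p assume p: "p \<in> T"
    obtain a b where ab: "p = (a,b)" by force
    have "a \<le> b \<and> b \<le> n" using assms(1) p ab by simp
    then show "p \<in> {0..n} \<times> {0..n}" using ab by simp
  qed
  show ?thesis unfolding transfer_system_def subgrps_def
  proof (intro conjI allI impI ballI)
    show "T \<subseteq> {0..n} \<times> {0..n}" by (rule s)
    show "K \<le> H" if "(K,H) \<in> T" for K H using assms(1)[OF that] by simp
    show "(K,K) \<in> T" if "K \<in> {0..n}" for K using assms(2) that by simp
    show "(K,L) \<in> T" if "(K,H) \<in> T" "(H,L) \<in> T" for K H L using assms(3) that .
    show "(min K L, min H L) \<in> T" if "(K,H) \<in> T" "L \<in> {0..n}" for K H L using rs that by simp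
  qed
qed

lemma ts_iff_tsR: "transfer_system n T \<longleftrightarrow> tsR 0 (Suc n) T"
proof
  assume ts: "transfer_system n T"
  show "tsR 0 (Suc n) T"
  proof (rule tsR_I)
    show "T \<subseteq> {0..<0+Suc n} \<times> {0..<0+Suc n}"
    proof
      fix p assume p: "p \<in> T"
      obtain a b where ab: "p = (a,b)" by force
      have "a \<le> n \<and> b \<le> n" using ts_sub[OF ts] p ab by simp
      then show "p \<in> {0..<0+Suc n} \<times> {0..<0+Suc n}" using ab by simp
    qed
    show "K \<le> H" if "(K,H)\<in>T" for K H using ts_le[OF ts that] .
    show "(K,K)\<in>T" if "0 \<le> K" "K < 0 + Suc n" for K using ts_refl[OF ts, of K] that by simp
    show "(K,L)\<in>T" if "(K,H)\<in>T" "(H,L)\<in>T" for K H L using ts_trans[OF ts that] .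
    show "(K,L)\<in>T" if "(K,H)\<in>T" "K \<le> L" "L \<le> H" for K H L using ts_down[OF ts that] .
  qed
next
  assume ts: "tsR 0 (Suc n) T"
  show "transfer_system n T"
  proof (rule ts_I)
    show "K \<le> H \<and> H \<le> n" if "(K,H)\<in>T" for K H using tsR_mem[OF ts that] tsR_le[OF ts that] by simp
    show "(K,K)\<in>T" if "K \<le> n" for K using tsR_refl[OF ts, of K] that by simp
    show "(K,L)\<in>T" if "(K,H)\<in>T" "(H,L)\<in>T" for K H L using tsR_trans[OF ts that] .
    show "(K,L)\<in>T" if "(K,H)\<in>T" "K \<le> L" "L \<le> H" for K H L using tsR_down[OF ts that] .
  qed
qed


lemma tsR_restrict:
  assumes ts: "tsR a m T" and ab: "a \<le> b" and bm: "b + m' \<le> a + m"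
  shows "tsR b m' (T \<inter> ({b..<b+m'} \<times> {b..<b+m'}))"
proof (rule tsR_I)
  show "T \<inter> ({b..<b+m'} \<times> {b..<b+m'}) \<subseteq> {b..<b+m'} \<times> {b..<b+m'}" by blast
  show "K \<le> H" if "(K,H) \<in> T \<inter> ({b..<b+m'} \<times> {b..<b+m'})" for K H
    using tsR_le[OF ts] that by blast
  show "(K,K) \<in> T \<inter> ({b..<b+m'} \<times> {b..<b+m'})" if "b \<le> K" "K < b + m'" for K
    using tsR_refl[OF ts, of K] that ab bm by simp
  show "(K,L) \<in> T \<inter> ({b..<b+m'} \<times> {b..<b+m'})"
    if "(K,H) \<in> T \<inter> ({b..<b+m'} \<times> {b..<b+m'})" "(H,L) \<in> T \<inter> ({b..<b+m'} \<times> {b..<b+m'})" for K H L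
    using tsR_trans[OF ts, of K H L] that by blast
  show "(K,L) \<in> T \<inter> ({b..<b+m'} \<times> {b..<b+m'})"
    if "(K,H) \<in> T \<inter> ({b..<b+m'} \<times> {b..<b+m'})" "K \<le> L" "L \<le> H" for K H L
  proof -
    have "(K,L) \<in> T" using tsR_down[OF ts, of K H L] that by blast
    moreover have "K \<in> {b..<b+m'}" "H \<in> {b..<b+m'}" using that by auto
    ultimately show ?thesis using that by auto
  qed
qed

definition FF :: "nat \<Rightarrow> nat \<Rightarrow> (nat \<times> nat) set \<Rightarrow> (nat \<times> nat) set \<Rightarrow> (nat \<times> nat) set" where
  "FF a j T1 T2 = {(a,h) | h. a \<le> h \<and> h \<le> a + j} \<union> T1 \<union> T2"

lemma FF_mem: "(x,y) \<in> FF a j T1 T2 \<longleftrightarrow> (x = a \<and> a \<le> y \<and> y \<le> a + j) \<or> (x,y) \<in> T1 \<or> (x,y) \<in> T2"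
  unfolding FF_def by blast

lemma FF_ts:
  assumes t1: "tsR (a+1) j T1" and t2: "tsR (a+1+j) (k-j) T2" and jk: "j \<le> k"
  shows "tsR a (Suc k) (FF a j T1 T2)" "(a, a+j) \<in> FF a j T1 T2" "(a, Suc (a+j)) \<notin> FF a j T1 T2"
proof -
  have m1: "a+1 \<le> x \<and> x < a+1+j \<and> a+1 \<le> y \<and> y < a+1+j" if "(x,y) \<in> T1" for x y
    using tsR_mem[OF t1 that] by simp
  have m2: "a+1+j \<le> x \<and> x < a+1+k \<and> a+1+j \<le> y \<and> y < a+1+k" if "(x,y) \<in> T2" for x y
    using tsR_mem[OF t2 that] jk by simp
  show "(a, a+j) \<in> FF a j T1 T2" unfolding FF_mem by simp
  show "(a, Suc (a+j)) \<notin> FF a j T1 T2" unfolding FF_mem using m1 m2 by fastforce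
  show "tsR a (Suc k) (FF a j T1 T2)"
  proof (rule tsR_I)
    show "FF a j T1 T2 \<subseteq> {a..<a + Suc k} \<times> {a..<a + Suc k}"
    proof
      fix p assume p: "p \<in> FF a j T1 T2"
      obtain x y where xy: "p = (x,y)" by force
      have "(x = a \<and> a \<le> y \<and> y \<le> a + j) \<or> (x,y) \<in> T1 \<or> (x,y) \<in> T2" using p xy FF_mem by blast
      then have "a \<le> x \<and> x < a + Suc k \<and> a \<le> y \<and> y < a + Suc k" using m1[of x y] m2[of x y] jk by auto
      then show "p \<in> {a..<a + Suc k} \<times> {a..<a + Suc k}" using xy by simp
    qed
    show "K \<le> H" if "(K,H) \<in> FF a j T1 T2" for K H
      using that tsR_le[OF t1, of K H] tsR_le[OF t2, of K H] unfolding FF_mem by blast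
    show "(K,K) \<in> FF a j T1 T2" if "a \<le> K" "K < a + Suc k" for K
    proof -
      have "K = a \<or> (a+1 \<le> K \<and> K < a+1+j) \<or> (a+1+j \<le> K \<and> K < a+1+j+(k-j))"
        using that jk by arith
      then consider "K = a" | "a+1 \<le> K \<and> K < a+1+j" | "a+1+j \<le> K \<and> K < a+1+j+(k-j)"
        by blast
      then show ?thesis
      proof cases
        case 1 then show ?thesis unfolding FF_mem by simp
      next
        case 2 then show ?thesis using tsR_refl[OF t1, of K] unfolding FF_mem by simp
      next
        case 3 then show ?thesis using tsR_refl[OF t2, of K] unfolding FF_mem by simp
      qed
    qed
    show "(K,L) \<in> FF a j T1 T2" if h1: "(K,H) \<in> FF a j T1 T2" and h2: "(H,L) \<in> FF a j T1 T2" for K H L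
    proof -
      consider "K = a \<and> a \<le> H \<and> H \<le> a+j" | "(K,H) \<in> T1" | "(K,H) \<in> T2"
        using h1 unfolding FF_mem by blast
      then show ?thesis
      proof cases
        case 1
        consider "H = a \<and> a \<le> L \<and> L \<le> a+j" | "(H,L) \<in> T1" | "(H,L) \<in> T2"
          using h2 unfolding FF_mem by blast
        then show ?thesis
        proof cases
          case c: 1 then show ?thesis using 1 unfolding FF_mem by simp
        next
          case c: 2 then have "L < a+1+j" "a \<le> L" using m1[of H L] by auto
          then show ?thesis using 1 unfolding FF_mem by simp
        next
          case c: 3 then have False using m2[of H L] 1 by simp
          then show ?thesis ..
        qed
      next
        case 2
        have "H \<noteq> a" "\<not> (a+1+j \<le> H)" using m1[OF 2] by auto
        then have "(H,L) \<in> T1" using h2 m2[of H L] unfolding FF_mem by auto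
        then show ?thesis using tsR_trans[OF t1 2] unfolding FF_mem by blast
      next
        case 3
        have "H \<noteq> a" "\<not> (H < a+1+j)" using m2[OF 3] by auto
        then have "(H,L) \<in> T2" using h2 m1[of H L] unfolding FF_mem by auto
        then show ?thesis using tsR_trans[OF t2 3] unfolding FF_mem by blast
      qed
    qed
    show "(K,L) \<in> FF a j T1 T2" if h: "(K,H) \<in> FF a j T1 T2" "K \<le> L" "L \<le> H" for K H L
    proof -
      consider "K = a \<and> a \<le> H \<and> H \<le> a+j" | "(K,H) \<in> T1" | "(K,H) \<in> T2"
        using h(1) unfolding FF_mem by blast
      then show ?thesis
      proof cases
        case 1 then show ?thesis using h unfolding FF_mem by simp
      next
        case 2 then show ?thesis using tsR_down[OF t1 2 h(2,3)] unfolding FF_mem by simp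
      next
        case 3 then show ?thesis using tsR_down[OF t2 3 h(2,3)] unfolding FF_mem by simp
      qed
    qed
  qed
qed

lemma FF_inj:
  assumes "T1 \<subseteq> {a+1..<a+1+j} \<times> {a+1..<a+1+j}" "T2 \<subseteq> {a+1+j..<a+1+k} \<times> {a+1+j..<a+1+k}"
  shows "FF a j T1 T2 \<inter> ({a+1..<a+1+j} \<times> {a+1..<a+1+j}) = T1"
    "FF a j T1 T2 \<inter> ({a+1+j..<a+1+k} \<times> {a+1+j..<a+1+k}) = T2"
  using assms unfolding FF_def by auto



lemma FF_dec:
  assumes ts: "tsR a (Suc k) T" and jk: "j \<le> k" and in1: "(a, a+j) \<in> T" and out: "(a, Suc (a+j)) \<notin> T"
  shows "T = FF a j (T \<inter> ({a+1..<a+1+j} \<times> {a+1..<a+1+j})) (T \<inter> ({a+1+j..<a+1+k} \<times> {a+1+j..<a+1+k}))"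
proof -
  have cl: "(x = a \<and> a \<le> y \<and> y \<le> a+j) \<or> (x \<in> {a+1..<a+1+j} \<and> y \<in> {a+1..<a+1+j}) \<or>
      (x \<in> {a+1+j..<a+1+k} \<and> y \<in> {a+1+j..<a+1+k})" if xyT: "(x,y) \<in> T" for x y
  proof -
    have xy: "a \<le> x" "x \<le> y" "y < a + Suc k" using tsR_mem[OF ts xyT] tsR_le[OF ts xyT] by auto
    show ?thesis
    proof (cases "x = a")
      case True
      show ?thesis
      proof (rule ccontr)
        assume "\<not> ?thesis"
        then have "Suc (a+j) \<le> y" using True xy by auto
        then have "(a, Suc (a+j)) \<in> T" using tsR_down[OF ts, of a y "Suc (a+j)"] xyT True by simp
        then show False using out by simp
      qed
    next
      case False
      show ?thesis
      proof (cases "x \<le> a + j")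
        case True
        have ax: "(a,x) \<in> T" using tsR_down[OF ts in1, of x] True xy by simp
        show ?thesis
        proof (rule ccontr)
          assume "\<not> ?thesis"
          then have "y \<ge> Suc (a+j)" using True False xy by auto
          moreover have "(a,y) \<in> T" using tsR_trans[OF ts ax xyT] .
          ultimately have "(a, Suc (a+j)) \<in> T" using tsR_down[OF ts, of a y "Suc (a+j)"] by simp
          then show False using out by simp
        qed
      next
        case F2: False then show ?thesis using xy by auto
      qed
    qed
  qed
  have dn: "(a,h) \<in> T" if "a \<le> h" "h \<le> a + j" for h using tsR_down[OF ts in1, of h] that by simp
  show ?thesis
  proof
    show "T \<subseteq> FF a j (T \<inter> ({a+1..<a+1+j} \<times> {a+1..<a+1+j})) (T \<inter> ({a+1+j..<a+1+k} \<times> {a+1+j..<a+1+k}))"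
    proof
      fix p assume pT: "p \<in> T"
      obtain x y where p: "p = (x,y)" by force
      show "p \<in> FF a j (T \<inter> ({a+1..<a+1+j} \<times> {a+1..<a+1+j})) (T \<inter> ({a+1+j..<a+1+k} \<times> {a+1+j..<a+1+k}))"
        using cl[of x y] pT unfolding p FF_mem by blast
    qed
    show "FF a j (T \<inter> ({a+1..<a+1+j} \<times> {a+1..<a+1+j})) (T \<inter> ({a+1+j..<a+1+k} \<times> {a+1+j..<a+1+k})) \<subseteq> T"
    proof
      fix p assume p: "p \<in> FF a j (T \<inter> ({a+1..<a+1+j} \<times> {a+1..<a+1+j})) (T \<inter> ({a+1+j..<a+1+k} \<times> {a+1+j..<a+1+k}))"
      obtain x y where xy: "p = (x,y)" by force
      show "p \<in> T" using p dn unfolding xy FF_mem by blast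
    qed
  qed
qed

definition DD :: "nat \<Rightarrow> nat \<Rightarrow> nat \<Rightarrow> (nat \<times> nat) set set" where
  "DD a k j = {T. tsR a (Suc k) T \<and> (a, a+j) \<in> T \<and> (a, Suc (a+j)) \<notin> T}"

lemma DD_eq:
  assumes jk: "j \<le> k"
  shows "DD a k j = (\<lambda>(T1,T2). FF a j T1 T2) ` ({T1. tsR (a+1) j T1} \<times> {T2. tsR (a+1+j) (k-j) T2})"
proof
  show "DD a k j \<subseteq> (\<lambda>(T1,T2). FF a j T1 T2) ` ({T1. tsR (a+1) j T1} \<times> {T2. tsR (a+1+j) (k-j) T2})"
  proof
    fix T assume "T \<in> DD a k j"
    then have ts: "tsR a (Suc k) T" and i: "(a, a+j) \<in> T" and o: "(a, Suc (a+j)) \<notin> T"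
      unfolding DD_def by auto
    have r1: "tsR (a+1) j (T \<inter> ({a+1..<a+1+j} \<times> {a+1..<a+1+j}))"
      by (rule tsR_restrict[OF ts]) (use jk in auto)
    have r2': "tsR (a+1+j) (k-j) (T \<inter> ({a+1+j..<a+1+j+(k-j)} \<times> {a+1+j..<a+1+j+(k-j)}))"
      by (rule tsR_restrict[OF ts]) (use jk in auto)
    have e: "a+1+j+(k-j) = a+1+k" using jk by simp
    have r2: "tsR (a+1+j) (k-j) (T \<inter> ({a+1+j..<a+1+k} \<times> {a+1+j..<a+1+k}))"
      using r2' unfolding e .
    show "T \<in> (\<lambda>(T1,T2). FF a j T1 T2) ` ({T1. tsR (a+1) j T1} \<times> {T2. tsR (a+1+j) (k-j) T2})"
      using FF_dec[OF ts jk i o] r1 r2 by (intro image_eqI[where x="(T \<inter> ({a+1..<a+1+j} \<times> {a+1..<a+1+j}), T \<inter> ({a+1+j..<a+1+k} \<times> {a+1+j..<a+1+k}))"]) auto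
  qed
  show "(\<lambda>(T1,T2). FF a j T1 T2) ` ({T1. tsR (a+1) j T1} \<times> {T2. tsR (a+1+j) (k-j) T2}) \<subseteq> DD a k j"
    using FF_ts[OF _ _ jk] unfolding DD_def by auto
qed

lemma DD_inj:
  assumes jk: "j \<le> k"
  shows "inj_on (\<lambda>(T1,T2). FF a j T1 T2) ({T1. tsR (a+1) j T1} \<times> {T2. tsR (a+1+j) (k-j) T2})"
proof (rule inj_onI)
  fix p q assume p: "p \<in> {T1. tsR (a+1) j T1} \<times> {T2. tsR (a+1+j) (k-j) T2}"
    and q: "q \<in> {T1. tsR (a+1) j T1} \<times> {T2. tsR (a+1+j) (k-j) T2}"
    and e: "(\<lambda>(T1,T2). FF a j T1 T2) p = (\<lambda>(T1,T2). FF a j T1 T2) q"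
  obtain P1 P2 where pp: "p = (P1,P2)" by force
  obtain Q1 Q2 where qq: "q = (Q1,Q2)" by force
  have ek: "a+1+j+(k-j) = a+1+k" using jk by simp
  have sP1: "P1 \<subseteq> {a+1..<a+1+j} \<times> {a+1..<a+1+j}" using tsR_sub[of "a+1" j P1] p pp by simp
  have sQ1: "Q1 \<subseteq> {a+1..<a+1+j} \<times> {a+1..<a+1+j}" using tsR_sub[of "a+1" j Q1] q qq by simp
  have sP2: "P2 \<subseteq> {a+1+j..<a+1+k} \<times> {a+1+j..<a+1+k}" using tsR_sub[of "a+1+j" "k-j" P2] p pp ek by simp
  have sQ2: "Q2 \<subseteq> {a+1+j..<a+1+k} \<times> {a+1+j..<a+1+k}" using tsR_sub[of "a+1+j" "k-j" Q2] q qq ek by simp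
  have e2: "FF a j P1 P2 = FF a j Q1 Q2" using e pp qq by simp
  have "P1 = Q1" using FF_inj(1)[OF sP1 sP2] FF_inj(1)[OF sQ1 sQ2] e2 by simp
  moreover have "P2 = Q2" using FF_inj(2)[OF sP1 sP2] FF_inj(2)[OF sQ1 sQ2] e2 by simp
  ultimately show "p = q" using pp qq by simp
qed

lemma tsR_finite: "finite {T. tsR a m T}"
proof (rule finite_subset)
  show "{T. tsR a m T} \<subseteq> Pow ({a..<a+m} \<times> {a..<a+m})" using tsR_sub by blast
qed simp

lemma card_DD:
  assumes jk: "j \<le> k"
  shows "card (DD a k j) = card {T1. tsR (a+1) j T1} * card {T2. tsR (a+1+j) (k-j) T2}"
  unfolding DD_eq[OF jk] card_image[OF DD_inj[OF jk]] card_cartesian_product ..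

lemma tsR_zero: "{T. tsR a 0 T} = {{}}"
proof -
  have "tsR a 0 {}" by (rule tsR_I) auto
  moreover have "T = {}" if "tsR a 0 T" for T using tsR_sub[OF that] by auto
  ultimately show ?thesis by blast
qed

lemma tsR_split:
  "{T. tsR a (Suc k) T} = (\<Union>j\<in>{0..k}. DD a k j)"
proof
  show "{T. tsR a (Suc k) T} \<subseteq> (\<Union>j\<in>{0..k}. DD a k j)"
  proof
    fix T assume "T \<in> {T. tsR a (Suc k) T}"
    then have ts: "tsR a (Suc k) T" by simp
    define S where "S = {j. j \<le> k \<and> (a, a+j) \<in> T}"
    have fS: "finite S" unfolding S_def by simp
    have 0: "0 \<in> S" unfolding S_def using tsR_refl[OF ts, of a] by simp
    define j where "j = Max S"
    have jS: "j \<in> S" unfolding j_def using fS 0 Max_in by blast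
    have jk: "j \<le> k" "(a, a+j) \<in> T" using jS unfolding S_def by auto
    have "(a, Suc (a+j)) \<notin> T"
    proof
      assume h: "(a, Suc (a+j)) \<in> T"
      show False
      proof (cases "Suc j \<le> k")
        case True
        then have "Suc j \<in> S" unfolding S_def using h by simp
        then have "Suc j \<le> j" unfolding j_def using fS Max_ge by blast
        then show False by simp
      next
        case False
        then have "j = k" using jk by simp
        then show False using tsR_mem[OF ts h] by simp
      qed
    qed
    then show "T \<in> (\<Union>j\<in>{0..k}. DD a k j)" using ts jk unfolding DD_def by auto
  qed
  show "(\<Union>j\<in>{0..k}. DD a k j) \<subseteq> {T. tsR a (Suc k) T}" unfolding DD_def by auto
qed

lemma DD_disj:
  assumes "i \<noteq> j" shows "DD a k i \<inter> DD a k j = {}"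
proof -
  have "False" if "T \<in> DD a k i" "T \<in> DD a k j" "i < j" for T i j
  proof -
    have ts: "tsR a (Suc k) T" and "(a, a+j) \<in> T" "(a, Suc (a+i)) \<notin> T"
      using that unfolding DD_def by auto
    moreover have "(a, Suc (a+i)) \<in> T" using tsR_down[OF ts \<open>(a, a+j) \<in> T\<close>, of "Suc (a+i)"] that(3) by simp
    ultimately show False by simp
  qed
  then show ?thesis using assms by (metis disjoint_iff nat_neq_iff)
qed

lemma card_tsR: "card {T. tsR a m T} = catalan m"
proof (induction m arbitrary: a rule: less_induct)
  case (less m)
  show ?case
  proof (cases m)
    case 0
    then show ?thesis using tsR_zero catalan_0 by simp
  next
    case (Suc k)
    have "card {T. tsR a (Suc k) T} = (\<Sum>j\<in>{0..k}. card (DD a k j))"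
      unfolding tsR_split
    proof (rule card_UN_disjoint)
      show "finite {0..k}" by simp
      show "\<forall>j\<in>{0..k}. finite (DD a k j)" unfolding DD_def
        using tsR_finite[of a "Suc k"] by (auto intro: finite_subset)
      show "\<forall>i\<in>{0..k}. \<forall>j\<in>{0..k}. i \<noteq> j \<longrightarrow> DD a k i \<inter> DD a k j = {}"
        using DD_disj by blast
    qed
    also have "\<dots> = (\<Sum>j\<in>{0..k}. catalan j * catalan (k - j))"
    proof (rule sum.cong)
      fix j assume "j \<in> {0..k}"
      then have jk: "j \<le> k" by simp
      show "card (DD a k j) = catalan j * catalan (k - j)"
        unfolding card_DD[OF jk] using less.IH[of j "a+1"] less.IH[of "k-j" "a+1+j"] Suc jk by simp
    qed simp
    also have "\<dots> = catalan (Suc k)" by (rule catalan_conv[symmetric])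
    finally show ?thesis using Suc by simp
  qed
qed

lemma card_top: "card {T. tsR a (Suc k) T \<and> (a, a+k) \<in> T} = catalan k"
proof -
  have "{T. tsR a (Suc k) T \<and> (a, a+k) \<in> T} = DD a k k"
    unfolding DD_def using tsR_mem by fastforce
  then show ?thesis using card_DD[of k k a] card_tsR tsR_zero catalan_0 by simp
qed



lemma card_H:
  assumes k1: "1 \<le> k"
  shows "card {T. tsR a (Suc k) T \<and> (a, a+k) \<notin> T \<and> (a+1, a+k) \<in> T} = catalan (k - 1)"
proof -
  define B where "B = {T2. tsR (a+1) k T2 \<and> (a+1, a+k) \<in> T2}"
  have eq: "{T. tsR a (Suc k) T \<and> (a, a+k) \<notin> T \<and> (a+1, a+k) \<in> T} = (\<lambda>T2. FF a 0 {} T2) ` B"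
  proof
    show "{T. tsR a (Suc k) T \<and> (a, a+k) \<notin> T \<and> (a+1, a+k) \<in> T} \<subseteq> (\<lambda>T2. FF a 0 {} T2) ` B"
    proof
      fix T assume "T \<in> {T. tsR a (Suc k) T \<and> (a, a+k) \<notin> T \<and> (a+1, a+k) \<in> T}"
      then have ts: "tsR a (Suc k) T" and o: "(a, a+k) \<notin> T" and i: "(a+1, a+k) \<in> T" by auto
      have i0: "(a, a+0) \<in> T" using tsR_refl[OF ts, of a] by simp
      have o0: "(a, Suc (a+0)) \<notin> T"
      proof
        assume "(a, Suc (a+0)) \<in> T"
        then have "(a, a+k) \<in> T" using tsR_trans[OF ts _ i] by simp
        then show False using o by simp
      qed
      have "T \<in> DD a k 0" unfolding DD_def using ts i0 o0 by simp
      then have "T \<in> (\<lambda>(T1,T2). FF a 0 T1 T2) ` ({T1. tsR (a+1) 0 T1} \<times> {T2. tsR (a+1+0) (k-0) T2})"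
        using DD_eq[of 0 k a] by simp
      then obtain T1 T2 where t1: "tsR (a+1) 0 T1" and t2: "tsR (a+1+0) (k-0) T2" and e: "T = FF a 0 T1 T2"
        by auto
      have "T1 = {}" using t1 tsR_zero by blast
      moreover have "(a+1, a+k) \<in> T2" using i unfolding e FF_mem using tsR_mem[OF t1] by auto
      ultimately show "T \<in> (\<lambda>T2. FF a 0 {} T2) ` B" unfolding B_def using e t2 by auto
    qed
    show "(\<lambda>T2. FF a 0 {} T2) ` B \<subseteq> {T. tsR a (Suc k) T \<and> (a, a+k) \<notin> T \<and> (a+1, a+k) \<in> T}"
    proof
      fix T assume "T \<in> (\<lambda>T2. FF a 0 {} T2) ` B"
      then obtain T2 where t2: "tsR (a+1) k T2" and i: "(a+1, a+k) \<in> T2" and e: "T = FF a 0 {} T2"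
        unfolding B_def by auto
      have t1: "tsR (a+1) 0 {}" using tsR_zero by blast
      have t2': "tsR (a+1+0) (k-0) T2" using t2 by simp
      have ts: "tsR a (Suc k) T" "(a, Suc (a+0)) \<notin> T" using FF_ts[OF t1 t2'] e by auto
      have "(a, a+k) \<notin> T"
      proof
        assume "(a, a+k) \<in> T"
        then have "(a, Suc (a+0)) \<in> T" using tsR_down[OF ts(1), of a "a+k" "Suc a"] k1 by simp
        then show False using ts(2) by simp
      qed
      moreover have "(a+1, a+k) \<in> T" unfolding e FF_mem using i by simp
      ultimately show "T \<in> {T. tsR a (Suc k) T \<and> (a, a+k) \<notin> T \<and> (a+1, a+k) \<in> T}" using ts by simp
    qed
  qed
  have inj: "inj_on (\<lambda>T2. FF a 0 {} T2) B"
  proof (rule inj_onI)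
    fix P Q assume p: "P \<in> B" and q: "Q \<in> B" and e: "FF a 0 {} P = FF a 0 {} Q"
    have sP: "P \<subseteq> {a+1+0..<a+1+k} \<times> {a+1+0..<a+1+k}" using tsR_sub[of "a+1" k P] p unfolding B_def by simp
    have sQ: "Q \<subseteq> {a+1+0..<a+1+k} \<times> {a+1+0..<a+1+k}" using tsR_sub[of "a+1" k Q] q unfolding B_def by simp
    have s0: "({}::(nat\<times>nat) set) \<subseteq> {a+1..<a+1+0} \<times> {a+1..<a+1+0}" by simp
    show "P = Q" using FF_inj(2)[OF s0 sP] FF_inj(2)[OF s0 sQ] e by simp
  qed
  have "card {T. tsR a (Suc k) T \<and> (a, a+k) \<notin> T \<and> (a+1, a+k) \<in> T} = card B"
    unfolding eq by (rule card_image[OF inj])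
  also have "B = {T2. tsR (a+1) (Suc (k-1)) T2 \<and> (a+1, (a+1)+(k-1)) \<in> T2}"
    unfolding B_def using k1 by simp
  also have "card \<dots> = catalan (k-1)" by (rule card_top)
  finally show ?thesis .
qed



lemma path_interval:
  fixes N x y :: nat and R :: "nat \<Rightarrow> nat \<Rightarrow> bool" and T :: "(nat \<times> nat) set"
  assumes rr: "\<And>u. u \<le> N \<Longrightarrow> R u u"
  and rt: "\<And>u v w. u \<le> N \<Longrightarrow> v \<le> N \<Longrightarrow> w \<le> N \<Longrightarrow> R u v \<Longrightarrow> R v w \<Longrightarrow> R u w"
  and ab: "\<And>a b. (a,b)\<in>T \<Longrightarrow> a \<le> b \<and> b \<le> N"
  and ri: "\<And>a b u v. (a,b)\<in>T \<Longrightarrow> a \<le> u \<Longrightarrow> u \<le> v \<Longrightarrow> v \<le> b \<Longrightarrow> R u v"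
  and p: "(x,y) \<in> (T \<union> T\<inverse>)\<^sup>*" and x: "x \<le> N"
  shows "y \<le> N \<and> (\<forall>u v. min x y \<le> u \<longrightarrow> u \<le> v \<longrightarrow> v \<le> max x y \<longrightarrow> R u v)"
  using p
proof (induction rule: rtrancl_induct)
  case base
  show ?case
  proof (intro conjI allI impI)
    show "x \<le> N" by (rule x)
    fix u v assume "min x x \<le> u" "u \<le> v" "v \<le> max x x"
    then have "u = x" "v = x" by auto
    then show "R u v" using rr x by simp
  qed
next
  case (step y z)
  have yN: "y \<le> N" and IH: "\<And>u v. min x y \<le> u \<Longrightarrow> u \<le> v \<Longrightarrow> v \<le> max x y \<Longrightarrow> R u v"
    using step.IH by auto
  obtain a b where abT: "(a,b) \<in> T" and abyz: "a = min y z" "b = max y z"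
  proof (cases "(y,z) \<in> T")
    case True
    then show ?thesis using that ab[OF True] by (simp add: min_def max_def)
  next
    case False
    then have zy: "(z,y) \<in> T" using step.hyps(2) by auto
    have "z \<le> y" using ab[OF zy] by simp
    then show ?thesis using that[of z y] zy by (simp add: min.absorb2 max.absorb1)
  qed
  have bN: "a \<le> b" "b \<le> N" using ab[OF abT] by auto
  have zN: "z \<le> N" using bN abyz by simp
  have R1: "R u v" if "(min x y \<le> u \<and> v \<le> max x y) \<or> (a \<le> u \<and> v \<le> b)" "u \<le> v" for u v
    using that IH ri[OF abT] by blast
  have "R u v" if u1: "min x z \<le> u" and uv: "u \<le> v" and v1: "v \<le> max x z" for u v
  proof (cases "u \<le> y \<and> y \<le> v")
    case True
    have "R u y" using R1[of u y] True u1 abyz by (auto simp: min_def max_def split: if_splits)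
    moreover have "R y v" using R1[of y v] True v1 abyz by (auto simp: min_def max_def split: if_splits)
    moreover have "u \<le> N" "v \<le> N" using True yN v1 x zN by auto
    ultimately show ?thesis using rt[of u y v] yN by blast
  next
    case False
    then show ?thesis using R1[of u v] u1 uv v1 abyz by (auto simp: min_def max_def split: if_splits)
  qed
  then show ?case using zN by blast
qed

locale tsys =
  fixes n :: nat and T :: "(nat \<times> nat) set"
  assumes ts: "transfer_system n T"
begin

abbreviation E where "E \<equiv> (T \<union> T\<inverse>)\<^sup>*"

lemma E_conv:
  assumes "(x,y) \<in> E" "x \<le> n" "min x y \<le> u" "u \<le> v" "v \<le> max x y"
  shows "(u,v) \<in> E"
proof -
  have ri: "(u,v) \<in> E" if "(a,b) \<in> T" "a \<le> u" "u \<le> v" "v \<le> b" for a b u v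
  proof -
    have "(a,u) \<in> T" "(a,v) \<in> T" using ts_down[OF ts that(1)] that by auto
    then have "(u,a) \<in> E" "(a,v) \<in> E" by auto
    then show ?thesis by simp
  qed
  have "y \<le> n \<and> (\<forall>u v. min x y \<le> u \<longrightarrow> u \<le> v \<longrightarrow> v \<le> max x y \<longrightarrow> (u,v) \<in> E)"
  proof (rule path_interval[where R="\<lambda>u v. (u,v) \<in> E"])
    show "a \<le> b \<and> b \<le> n" if "(a,b) \<in> T" for a b using ts_sub[OF ts that] ts_le[OF ts that] by simp
  qed (use assms ri in auto)
  then show ?thesis using assms by blast
qed

lemma E_bound: "(x,y) \<in> E \<Longrightarrow> x \<le> n \<Longrightarrow> y \<le> n"
proof (induction rule: rtrancl_induct)
  case (step y z) then show ?case using ts_sub[OF ts, of y z] ts_sub[OF ts, of z y] by auto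
qed simp

lemma E_sym: "(x,y) \<in> E \<Longrightarrow> (y,x) \<in> E"
proof -
  assume "(x,y) \<in> E"
  then have "(y,x) \<in> ((T \<union> T\<inverse>)\<inverse>)\<^sup>*" by (rule rtrancl_converseI)
  moreover have "(T \<union> T\<inverse>)\<inverse> = T \<union> T\<inverse>" by auto
  ultimately show ?thesis by simp
qed

lemma E_trans: "(x,y) \<in> E \<Longrightarrow> (y,z) \<in> E \<Longrightarrow> (x,z) \<in> E" by simp

lemma E0: "(0,y) \<in> E \<Longrightarrow> (0,y) \<in> T"
proof (induction rule: rtrancl_induct)
  case base then show ?case using ts_refl[OF ts] by simp
next
  case (step y z)
  show ?case
  proof (cases "(y,z) \<in> T")
    case True then show ?thesis using ts_trans[OF ts step.IH] by simp
  next
    case False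
    then have "(z,y) \<in> T" using step.hyps(2) by auto
    then show ?thesis using ts_down[OF ts step.IH, of z] ts_le[OF ts, of z y] by simp
  qed
qed

lemma E1: "(1,y) \<in> E \<Longrightarrow> 1 \<le> n \<Longrightarrow> (0,y) \<notin> E \<Longrightarrow> (1,y) \<in> T"
proof (induction rule: rtrancl_induct)
  case base then show ?case using ts_refl[OF ts] by simp
next
  case (step y z)
  have zy: "(z,y) \<in> E" using step.hyps(2) by auto
  have "(0,y) \<notin> E"
  proof
    assume "(0,y) \<in> E" then have "(0,z) \<in> E" using step.hyps(2) by (meson E_trans r_into_rtrancl)
    then show False using step.prems by simp
  qed
  then have IH: "(1,y) \<in> T" using step.IH step.prems by simp
  show ?case
  proof (cases "(y,z) \<in> T")
    case True then show ?thesis using ts_trans[OF ts IH] by simp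
  next
    case False
    then have zyT: "(z,y) \<in> T" using step.hyps(2) by auto
    have "z \<noteq> 0"
    proof
      assume "z = 0" then have "(0,z) \<in> E" by simp
      then show False using step.prems by simp
    qed
    then show ?thesis using ts_down[OF ts IH, of z] ts_le[OF ts zyT] by simp
  qed
qed

definition H0 where "H0 = {(u,v). u \<le> v \<and> v \<le> n \<and> (u,v) \<in> E}"

lemma H0_mem: "(u,v) \<in> H0 \<longleftrightarrow> u \<le> v \<and> v \<le> n \<and> (u,v) \<in> E"
  unfolding H0_def by simp

lemma H0_ts: "transfer_system n H0"
proof (rule ts_I)
  show "K \<le> H \<and> H \<le> n" if "(K,H) \<in> H0" for K H using that unfolding H0_mem by simp
  show "(K,K) \<in> H0" if "K \<le> n" for K using that unfolding H0_mem by simp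
  show "(K,L) \<in> H0" if "(K,H) \<in> H0" "(H,L) \<in> H0" for K H L using that unfolding H0_mem by auto
  show "(K,L) \<in> H0" if h: "(K,H) \<in> H0" "K \<le> L" "L \<le> H" for K H L
  proof -
    have "(K,H) \<in> E" "K \<le> n" "H \<le> n" using h unfolding H0_mem by auto
    then have "(K,L) \<in> E" using E_conv[of K H K L] h by simp
    then show ?thesis using h unfolding H0_mem by simp
  qed
qed

lemma T_H0: "T \<subseteq> H0"
proof
  fix p assume "p \<in> T"
  obtain a b where p: "p = (a,b)" by force
  show "p \<in> H0" using \<open>p \<in> T\<close> ts_sub[OF ts, of a b] ts_le[OF ts, of a b] unfolding p H0_mem by auto
qed

lemma H0_sub:
  assumes ts': "transfer_system n T'" and h: "\<And>a b u. (a,b) \<in> T \<Longrightarrow> a \<le> u \<Longrightarrow> u \<le> b \<Longrightarrow> (u,b) \<in> T'"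
  shows "H0 \<subseteq> T'"
proof
  fix p assume "p \<in> H0"
  obtain u v where p: "p = (u,v)" by force
  have uv: "u \<le> v" "v \<le> n" "(u,v) \<in> E" using \<open>p \<in> H0\<close> unfolding p H0_mem by auto
  have ri: "(c,d) \<in> T'" if "(a,b) \<in> T" "a \<le> c" "c \<le> d" "d \<le> b" for a b c d
    using ts_down[OF ts' h[OF that(1), of c]] that by simp
  have "v \<le> n \<and> (\<forall>c d. min u v \<le> c \<longrightarrow> c \<le> d \<longrightarrow> d \<le> max u v \<longrightarrow> (c,d) \<in> T')"
  proof (rule path_interval[where R="\<lambda>u v. (u,v) \<in> T'" and T=T])
    show "a \<le> b \<and> b \<le> n" if "(a,b) \<in> T" for a b using ts_sub[OF ts that] ts_le[OF ts that] by simp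
    show "(c,c) \<in> T'" if "c \<le> n" for c using ts_refl[OF ts' that] .
    show "(c,e) \<in> T'" if "(c,d) \<in> T'" "(d,e) \<in> T'" for c d e using ts_trans[OF ts' that] .
  qed (use uv ri in auto)
  then show "p \<in> T'" unfolding p using uv by auto
qed

lemma Hull_eq: "Hull n T = H0"
proof -
  have sat: "saturated n H0" unfolding saturated_def
  proof (intro allI impI)
    fix L K H assume h: "L \<le> K" "K \<le> H" "(L,H) \<in> H0"
    have "(L,H) \<in> E" "L \<le> n" "H \<le> n" using h unfolding H0_mem by auto
    then have "(K,H) \<in> E" using E_conv[of L H K H] h by simp
    then show "(K,H) \<in> H0" using h unfolding H0_mem by simp
  qed
  have mem: "H0 \<in> {T'. transfer_system n T' \<and> saturated n T' \<and> T \<subseteq> T'}"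
    using H0_ts sat T_H0 by simp
  have low: "H0 \<subseteq> X" if "X \<in> {T'. transfer_system n T' \<and> saturated n T' \<and> T \<subseteq> T'}" for X
  proof -
    have X: "transfer_system n X" "saturated n X" "T \<subseteq> X" using that by auto
    show ?thesis
    proof (rule H0_sub[OF X(1)])
      fix a b u assume "(a,b) \<in> T" "a \<le> u" "u \<le> b"
      then show "(u,b) \<in> X" using X(2,3) unfolding saturated_def by blast
    qed
  qed
  show ?thesis unfolding Hull_def
    using mem low by (intro antisym Inter_greatest Inter_lower) auto
qed

end


context tsys begin

lemma compat_iff:
  assumes ts': "transfer_system n T'"
  shows "compatible n T T' \<longleftrightarrow> H0 \<subseteq> T'"
proof
  assume c: "compatible n T T'"
  have cc: "(C,A) \<in> T'" if "A \<le> n" "B \<le> n" "C \<le> n" "B \<le> A" "C \<le> A" "(B,A) \<in> T" "(min B C, B) \<in> T'" for A B C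
  proof -
    have d: "\<forall>A\<in>{0..n}. \<forall>B\<in>{0..n}. B \<le> A \<longrightarrow> (\<forall>C\<in>{0..n}. C \<le> A \<longrightarrow> (B, A) \<in> T \<longrightarrow> (min B C, B) \<in> T' \<longrightarrow> (C, A) \<in> T')"
      using c unfolding compatible_def subgrps_def by blast
    show ?thesis using d[rule_format, of A B C] that by simp
  qed
  show "H0 \<subseteq> T'"
  proof (rule H0_sub[OF ts'])
    fix a b u assume h: "(a,b) \<in> T" "a \<le> u" "u \<le> b"
    have "b \<le> n" "a \<le> n" using ts_sub[OF ts h(1)] by auto
    moreover have "(min a u, a) \<in> T'" using ts_refl[OF ts' \<open>a \<le> n\<close>] h by (simp add: min_def)
    ultimately show "(u,b) \<in> T'" using cc[of b a u] h by simp
  qed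
next
  assume h0: "H0 \<subseteq> T'"
  have "T \<subseteq> T'" using T_H0 h0 by blast
  moreover have "(C,A) \<in> T'" if "A \<le> n" "B \<le> n" "C \<le> n" "B \<le> A" "C \<le> A" "(B,A) \<in> T" "(min B C, B) \<in> T'" for A B C
  proof (cases "B \<le> C")
    case True
    have "(B,A) \<in> E" using that(6) by auto
    then have "(C,A) \<in> E" using E_conv[of B A C A] that True by simp
    then have "(C,A) \<in> H0" unfolding H0_mem using that by simp
    then show ?thesis using h0 by blast
  next
    case False
    then have "(C,B) \<in> T'" using that(7) by (simp add: min_def)
    moreover have "(B,A) \<in> T'" using that(6) T_H0 h0 by blast
    ultimately show ?thesis using ts_trans[OF ts'] by blast
  qed
  ultimately show "compatible n T T'" unfolding compatible_def subgrps_def by auto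
qed

lemma ts_Tc: "transfer_system n T' \<Longrightarrow> T' \<subseteq> complete_ts n"
  unfolding complete_ts_def using ts_sub ts_le by fastforce

lemma H0_Tc: "H0 \<subseteq> complete_ts n"
  using ts_Tc[OF H0_ts] .

lemma lsp_iff:
  "lesser_simply_paired n T \<longleftrightarrow> (0,n) \<in> E \<or> (\<forall>x. 1 \<le> x \<longrightarrow> x \<le> n \<longrightarrow> (x,n) \<in> E)"
proof
  assume lsp: "lesser_simply_paired n T"
  have L: "T' = H0 \<or> T' = complete_ts n" if "transfer_system n T'" "H0 \<subseteq> T'" for T'
  proof -
    have "T \<subseteq> T'" using T_H0 that(2) by blast
    then have "compatible n T T' \<longleftrightarrow> T' = Hull n T \<or> T' = complete_ts n"
      using lsp that(1) unfolding lesser_simply_paired_def by blast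
    then show ?thesis using compat_iff[OF that(1)] that(2) Hull_eq by simp
  qed
  show "(0,n) \<in> E \<or> (\<forall>x. 1 \<le> x \<longrightarrow> x \<le> n \<longrightarrow> (x,n) \<in> E)"
  proof (rule ccontr)
    assume "\<not> ?thesis"
    then obtain x where n0: "(0,n) \<notin> E" and x: "1 \<le> x" "x \<le> n" "(x,n) \<notin> E" by blast
    define T' where "T' = H0 \<union> {(0,h) | h. h \<le> n}"
    have T'm: "(u,v) \<in> T' \<longleftrightarrow> (u,v) \<in> H0 \<or> (u = 0 \<and> v \<le> n)" for u v unfolding T'_def by blast
    have ts': "transfer_system n T'"
    proof (rule ts_I)
      show "K \<le> H \<and> H \<le> n" if "(K,H) \<in> T'" for K H using that unfolding T'm H0_mem by auto
      show "(K,K) \<in> T'" if "K \<le> n" for K using that unfolding T'm H0_mem by simp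
      show "(K,L) \<in> T'" if h: "(K,H) \<in> T'" "(H,L) \<in> T'" for K H L
      proof (cases "K = 0")
        case True
        have "L \<le> n" using h(2) unfolding T'm H0_mem by auto
        then show ?thesis using True unfolding T'm by simp
      next
        case False
        then have k: "(K,H) \<in> H0" using h(1) unfolding T'm by simp
        then have "H \<noteq> 0" using False unfolding H0_mem by auto
        then have "(H,L) \<in> H0" using h(2) unfolding T'm by simp
        then show ?thesis using ts_trans[OF H0_ts k] unfolding T'm by simp
      qed
      show "(K,L) \<in> T'" if h: "(K,H) \<in> T'" "K \<le> L" "L \<le> H" for K H L
      proof (cases "(K,H) \<in> H0")
        case True then show ?thesis using ts_down[OF H0_ts True h(2,3)] unfolding T'm by simp
      next
        case False then show ?thesis using h unfolding T'm by simp
      qed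
    qed
    have "H0 \<subseteq> T'" unfolding T'_def by blast
    then have "T' = H0 \<or> T' = complete_ts n" using L ts' by blast
    moreover have "(0,n) \<in> T'" unfolding T'm by simp
    moreover have "(0,n) \<notin> H0" using n0 unfolding H0_mem by simp
    moreover have "(x,n) \<in> complete_ts n" using x unfolding complete_ts_def by simp
    moreover have "(x,n) \<notin> T'" using x unfolding T'm H0_mem by simp
    ultimately show False by blast
  qed
next
  assume cond: "(0,n) \<in> E \<or> (\<forall>x. 1 \<le> x \<longrightarrow> x \<le> n \<longrightarrow> (x,n) \<in> E)"
  show "lesser_simply_paired n T" unfolding lesser_simply_paired_def
  proof (intro allI impI)
    fix T' assume ts': "transfer_system n T'" and TT': "T \<subseteq> T'"
    have "H0 \<subseteq> T' \<longleftrightarrow> T' = H0 \<or> T' = complete_ts n"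
    proof
      assume h0: "H0 \<subseteq> T'"
      have sub: "T' \<subseteq> complete_ts n" by (rule ts_Tc[OF ts'])
      show "T' = H0 \<or> T' = complete_ts n"
      proof (cases "(0,n) \<in> E")
        case True
        have "complete_ts n \<subseteq> T'"
        proof
          fix p assume "p \<in> complete_ts n"
          then obtain u v where p: "p = (u,v)" "u \<le> v" "v \<le> n" unfolding complete_ts_def by auto
          have "(u,v) \<in> E" using E_conv[OF True, of u v] p by simp
          then have "(u,v) \<in> H0" using p unfolding H0_mem by simp
          then show "p \<in> T'" using h0 p by blast
        qed
        then show ?thesis using sub by blast
      next
        case False
        then have C: "\<And>x. 1 \<le> x \<Longrightarrow> x \<le> n \<Longrightarrow> (x,n) \<in> E" using cond by blast
        have Cuv: "(u,v) \<in> T'" if "1 \<le> u" "u \<le> v" "v \<le> n" for u v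
        proof -
          have "(u,n) \<in> E" "(v,n) \<in> E" using C that by auto
          then have "(u,v) \<in> E" using E_sym E_trans by blast
          then have "(u,v) \<in> H0" using that unfolding H0_mem by simp
          then show ?thesis using h0 by blast
        qed
        show ?thesis
        proof (cases "\<exists>h. (0,h) \<in> T' \<and> 1 \<le> h")
          case True
          then obtain h where h: "(0,h) \<in> T'" "1 \<le> h" by blast
          have hn: "h \<le> n" using ts_sub[OF ts' h(1)] by simp
          have "(0,1) \<in> T'" using ts_down[OF ts' h(1), of 1] h by simp
          moreover have "(1,n) \<in> T'" using Cuv[of 1 n] h hn by simp
          ultimately have 0: "(0,n) \<in> T'" using ts_trans[OF ts'] by blast
          have "complete_ts n \<subseteq> T'"
          proof
            fix p assume "p \<in> complete_ts n"
            then obtain u v where p: "p = (u,v)" "u \<le> v" "v \<le> n" unfolding complete_ts_def by auto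
            show "p \<in> T'"
            proof (cases "u = 0")
              case True then show ?thesis using ts_down[OF ts' 0, of v] p by simp
            next
              case False then show ?thesis using Cuv[of u v] p by simp
            qed
          qed
          then show ?thesis using sub by blast
        next
          case F2: False
          have "T' \<subseteq> H0"
          proof
            fix p assume pT: "p \<in> T'"
            obtain u v where p: "p = (u,v)" by force
            have uv: "u \<le> v" "v \<le> n" using ts_sub[OF ts', of u v] ts_le[OF ts', of u v] pT p by auto
            show "p \<in> H0"
            proof (cases "u = 0")
              case True
              then have "v = 0" using F2 pT p by (cases v) auto
              then show ?thesis using True p by (simp add: H0_mem)
            next
              case False
              have "(u,n) \<in> E" "(v,n) \<in> E" using C uv False by auto
              then have "(u,v) \<in> E" using E_sym E_trans by blast
              then show ?thesis using p uv by (simp add: H0_mem)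
            qed
          qed
          then show ?thesis using h0 by blast
        qed
      qed
    next
      assume "T' = H0 \<or> T' = complete_ts n"
      then show "H0 \<subseteq> T'" using H0_Tc by blast
    qed
    then show "compatible n T T' = (T' = Hull n T \<or> T' = complete_ts n)"
      using compat_iff[OF ts'] Hull_eq by simp
  qed
qed

lemma cond_iff:
  assumes n1: "1 \<le> n"
  shows "((0,n) \<in> E \<or> (\<forall>x. 1 \<le> x \<longrightarrow> x \<le> n \<longrightarrow> (x,n) \<in> E)) \<longleftrightarrow> (0,n) \<in> T \<or> (1,n) \<in> T"
proof
  assume c: "(0,n) \<in> E \<or> (\<forall>x. 1 \<le> x \<longrightarrow> x \<le> n \<longrightarrow> (x,n) \<in> E)"
  show "(0,n) \<in> T \<or> (1,n) \<in> T"
  proof (cases "(0,n) \<in> E")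
    case True then show ?thesis using E0 by blast
  next
    case False
    then have "(1,n) \<in> E" using c n1 by blast
    then show ?thesis using E1 n1 False by blast
  qed
next
  assume c: "(0,n) \<in> T \<or> (1,n) \<in> T"
  show "(0,n) \<in> E \<or> (\<forall>x. 1 \<le> x \<longrightarrow> x \<le> n \<longrightarrow> (x,n) \<in> E)"
  proof (cases "(0,n) \<in> T")
    case True then show ?thesis by auto
  next
    case False
    then have "(1,n) \<in> E" using c by auto
    then have "\<forall>x. 1 \<le> x \<longrightarrow> x \<le> n \<longrightarrow> (x,n) \<in> E" using E_conv[of 1 n] n1 by simp
    then show ?thesis by blast
  qed
qed

end


context tsys begin

lemma cl_mem: "y \<in> component_of n T x \<longleftrightarrow> y \<le> n \<and> (x,y) \<in> E"
  unfolding component_of_def subgrps_def by auto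

lemma comps: "components n T = (\<lambda>x. component_of n T x) ` {0..n}"
proof -
  have key: "(E \<inter> ({0..n} \<times> {0..n})) `` {x} = component_of n T x" if "x \<in> {0..n}" for x
    using that unfolding component_of_def subgrps_def by auto
  show ?thesis
  proof (rule set_eqI)
    fix S
    show "S \<in> components n T \<longleftrightarrow> S \<in> (\<lambda>x. component_of n T x) ` {0..n}"
      unfolding components_def quotient_def subgrps_def using key by auto
  qed
qed

lemma connA: "connected_ts n T \<longleftrightarrow> (0,n) \<in> E"
proof
  assume "connected_ts n T"
  then have "card ((\<lambda>x. component_of n T x) ` {0..n}) = 1" unfolding connected_ts_def comps .
  then obtain S where S: "(\<lambda>x. component_of n T x) ` {0..n} = {S}" by (rule card_1_singletonE)
  have "component_of n T 0 = S" "component_of n T n = S" using S by auto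
  moreover have "n \<in> component_of n T n" unfolding cl_mem by simp
  ultimately have "n \<in> component_of n T 0" by simp
  then show "(0,n) \<in> E" unfolding cl_mem by simp
next
  assume h: "(0,n) \<in> E"
  have c: "component_of n T x = {0..n}" if "x \<in> {0..n}" for x
  proof (rule set_eqI)
    fix y
    show "y \<in> component_of n T x \<longleftrightarrow> y \<in> {0..n}"
    proof
      assume "y \<in> component_of n T x" then show "y \<in> {0..n}" unfolding cl_mem by simp
    next
      assume y: "y \<in> {0..n}"
      have "(0,x) \<in> E" "(0,y) \<in> E" using E_conv[OF h, of 0 x] E_conv[OF h, of 0 y] that y by auto
      then have "(x,y) \<in> E" using E_sym E_trans by blast
      then show "y \<in> component_of n T x" unfolding cl_mem using y by simp
    qed
  qed
  have "(\<lambda>x. component_of n T x) ` {0..n} = (\<lambda>x. {0..n}) ` {0..n}"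
    by (rule image_cong) (use c in auto)
  also have "\<dots> = {{0..n}}" by auto
  finally show "connected_ts n T" unfolding connected_ts_def comps by simp
qed

lemma connB:
  assumes n1: "1 \<le> n"
  shows "(card (components n T) = 2 \<and> component_of n T 0 = {0}) \<longleftrightarrow>
     ((0,n) \<notin> E \<and> (\<forall>x. 1 \<le> x \<longrightarrow> x \<le> n \<longrightarrow> (x,n) \<in> E))"
proof
  assume h: "card (components n T) = 2 \<and> component_of n T 0 = {0}"
  have c0: "component_of n T 0 = {0}" using h by simp
  have cd: "card ((\<lambda>x. component_of n T x) ` {0..n}) = 2" using h comps by simp
  have n0: "(0,n) \<notin> E"
  proof
    assume "(0,n) \<in> E"
    then have "n \<in> component_of n T 0" unfolding cl_mem by simp
    then show False using c0 n1 by simp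
  qed
  have "(x,n) \<in> E" if x: "1 \<le> x" "x \<le> n" for x
  proof (rule ccontr)
    assume xn: "(x,n) \<notin> E"
    have d1: "component_of n T 0 \<noteq> component_of n T x"
    proof
      assume e: "component_of n T 0 = component_of n T x"
      have "x \<in> component_of n T x" unfolding cl_mem using x by simp
      then have "x \<in> component_of n T 0" unfolding e .
      then have "x \<in> {0}" unfolding c0 .
      then show False using x by simp
    qed
    have d2: "component_of n T 0 \<noteq> component_of n T n"
    proof
      assume e: "component_of n T 0 = component_of n T n"
      have "n \<in> component_of n T n" unfolding cl_mem by simp
      then have "n \<in> component_of n T 0" unfolding e .
      then have "n \<in> {0}" unfolding c0 .
      then show False using n1 by simp
    qed
    have d3: "component_of n T x \<noteq> component_of n T n"
    proof
      assume e: "component_of n T x = component_of n T n"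
      have "n \<in> component_of n T n" unfolding cl_mem by simp
      then have "n \<in> component_of n T x" unfolding e .
      then show False using xn unfolding cl_mem by simp
    qed
    have "card {component_of n T 0, component_of n T x, component_of n T n} = 3"
      using d1 d2 d3 by simp
    moreover have "{component_of n T 0, component_of n T x, component_of n T n} \<subseteq> (\<lambda>x. component_of n T x) ` {0..n}"
      using x by auto
    ultimately have "3 \<le> card ((\<lambda>x. component_of n T x) ` {0..n})"
      by (metis card_mono finite_atLeastAtMost finite_imageI)
    then show False using cd by simp
  qed
  then show "(0,n) \<notin> E \<and> (\<forall>x. 1 \<le> x \<longrightarrow> x \<le> n \<longrightarrow> (x,n) \<in> E)" using n0 by blast
next
  assume h: "(0,n) \<notin> E \<and> (\<forall>x. 1 \<le> x \<longrightarrow> x \<le> n \<longrightarrow> (x,n) \<in> E)"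
  then have n0: "(0,n) \<notin> E" and C: "\<And>x. 1 \<le> x \<Longrightarrow> x \<le> n \<Longrightarrow> (x,n) \<in> E" by auto
  have c0: "component_of n T 0 = {0}"
  proof (rule set_eqI)
    fix y
    show "y \<in> component_of n T 0 \<longleftrightarrow> y \<in> {0}"
    proof
      assume "y \<in> component_of n T 0"
      then have y: "y \<le> n" "(0,y) \<in> E" unfolding cl_mem by auto
      show "y \<in> {0}"
      proof (rule ccontr)
        assume "y \<notin> {0}"
        then have "(y,n) \<in> E" using C y by simp
        then show False using y n0 E_trans by blast
      qed
    next
      assume "y \<in> {0}" then show "y \<in> component_of n T 0" unfolding cl_mem by simp
    qed
  qed
  have cx: "component_of n T x = {1..n}" if x: "1 \<le> x" "x \<le> n" for x
  proof (rule set_eqI)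
    fix y
    show "y \<in> component_of n T x \<longleftrightarrow> y \<in> {1..n}"
    proof
      assume "y \<in> component_of n T x"
      then have y: "y \<le> n" "(x,y) \<in> E" unfolding cl_mem by auto
      have "y \<noteq> 0"
      proof
        assume "y = 0"
        then have "(0,x) \<in> E" using y E_sym by simp
        then show False using C[OF x] n0 E_trans by blast
      qed
      then show "y \<in> {1..n}" using y by simp
    next
      assume y: "y \<in> {1..n}"
      have "(x,n) \<in> E" "(y,n) \<in> E" using C x y by auto
      then have "(x,y) \<in> E" using E_sym E_trans by blast
      then show "y \<in> component_of n T x" unfolding cl_mem using y by simp
    qed
  qed
  have img: "(\<lambda>x. component_of n T x) ` {0..n} = {{0}, {1..n}}"
  proof (rule set_eqI)
    fix S
    show "S \<in> (\<lambda>x. component_of n T x) ` {0..n} \<longleftrightarrow> S \<in> {{0}, {1..n}}"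
    proof
      assume "S \<in> (\<lambda>x. component_of n T x) ` {0..n}"
      then obtain x where x: "x \<le> n" "S = component_of n T x" by auto
      show "S \<in> {{0}, {1..n}}"
      proof (cases "x = 0")
        case True then show ?thesis using x c0 by simp
      next
        case False then show ?thesis using x cx[of x] by simp
      qed
    next
      assume "S \<in> {{0}, {1..n}}"
      then show "S \<in> (\<lambda>x. component_of n T x) ` {0..n}"
      proof
        assume "S = {0}"
        then have "S = component_of n T 0" using c0 by simp
        then show ?thesis by auto
      next
        assume "S \<in> {{1..n}}"
        then have "S = component_of n T n" using cx[of n] n1 by simp
        then show ?thesis by auto
      qed
    qed
  qed
  have "(0::nat) \<notin> {1..n}" by simp
  then have "{0::nat} \<noteq> {1..n}" by blast
  then have "card {{0::nat}, {1..n}} = 2" by simp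
  then show "card (components n T) = 2 \<and> component_of n T 0 = {0}" using img c0 comps by simp
qed

lemma comp_iff:
  assumes n1: "1 \<le> n"
  shows "(connected_ts n T \<or> (card (components n T) = 2 \<and> component_of n T 0 = {0})) \<longleftrightarrow>
     ((0,n) \<in> E \<or> (\<forall>x. 1 \<le> x \<longrightarrow> x \<le> n \<longrightarrow> (x,n) \<in> E))"
  using connA connB[OF n1] by blast

end

lemma arith1:
  fixes m :: nat
  shows "cr (Suc m) + cr m = real ((5 * Suc m - 1) * fact (2 * Suc m - 2)) / real (fact (Suc m - 1) * fact (Suc m + 1))"
proof -
  define F where "F = real (fact (2*m))"
  define G where "G = real (fact m)"
  have G0: "G > 0" unfolding G_def by (simp only: of_nat_0_less_iff fact_gt_zero)
  have f1: "real (fact (m+1)) = (real m + 1) * G" unfolding G_def by (simp add: algebra_simps)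
  have nf: "(fact (Suc m + 1)::nat) = (m+2) * ((m+1) * fact m)" by (simp add: algebra_simps)
  have f2: "real (fact (Suc m + 1)) = (real m + 2) * ((real m + 1) * G)"
    unfolding G_def nf by (simp add: algebra_simps del: of_nat_fact)
  have cm: "cr m = F / ((real m + 1) * G * G)" unfolding cr_def F_def f1 G_def by simp
  have lhs: "cr (Suc m) + cr m = cr m * (5 * real m + 4) / (real m + 2)"
    unfolding cr_Suc by (simp add: field_simps)
  have e1: "5 * Suc m - 1 = 5 * m + 4" by simp
  have e2: "2 * Suc m - 2 = 2 * m" by simp
  have e3: "Suc m - 1 = m" by simp
  have rhs: "real ((5 * Suc m - 1) * fact (2 * Suc m - 2)) / real (fact (Suc m - 1) * fact (Suc m + 1))
      = (5 * real m + 4) * F / (G * ((real m + 2) * ((real m + 1) * G)))"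
    unfolding e1 e2 e3 of_nat_mult f2 F_def[symmetric] G_def[symmetric] by simp
  have "cr (Suc m) + cr m = cr m * (5 * real m + 4) / (real m + 2)" by (rule lhs)
  also have "\<dots> = F / ((real m + 1) * G * G) * (5 * real m + 4) / (real m + 2)" unfolding cm ..
  also have "\<dots> = (5 * real m + 4) * F / (G * ((real m + 2) * ((real m + 1) * G)))"
    using G0 by (simp add: field_simps)
  also have "\<dots> = real ((5 * Suc m - 1) * fact (2 * Suc m - 2)) / real (fact (Suc m - 1) * fact (Suc m + 1))"
    using rhs by simp
  finally show ?thesis .
qed

lemma cr_pos: "cr m > 0"
  unfolding cr_def by (simp only: of_nat_0_less_iff fact_gt_zero mult_pos_pos divide_pos_pos)

lemma arith2:
  fixes m :: nat
  shows "(cr (Suc m) + cr m) / cr (Suc (Suc m)) = (5 * real (Suc m) ^ 2 + 9 * real (Suc m) - 2) / (16 * real (Suc m) ^ 2 - 4)"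
proof -
  define c where "c = cr m"
  have c0: "c > 0" unfolding c_def by (rule cr_pos)
  have a: "cr (Suc m) = c * (2 * (2 * real m + 1)) / (real m + 2)" unfolding c_def by (rule cr_Suc)
  have b: "cr (Suc (Suc m)) = c * (2 * (2 * real m + 1)) / (real m + 2) * (2 * (2 * real (Suc m) + 1)) / (real (Suc m) + 2)"
    using cr_Suc[of "Suc m"] a by simp
  have num: "cr (Suc m) + cr m = c * ((5*real m+4)/(real m+2))"
    unfolding a c_def by (simp add: field_simps)
  have den: "cr (Suc (Suc m)) = c * ((2 * (2 * real m + 1)) / (real m + 2) * (2 * (2 * real (Suc m) + 1)) / (real (Suc m) + 2))"
    unfolding b by simp
  have AB: "((5*real m+4)/(real m+2)) / ((2 * (2 * real m + 1)) / (real m + 2) * (2 * (2 * real (Suc m) + 1)) / (real (Suc m) + 2))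
     = (5 * real m + 4) * (real m + 3) / (4 * (2 * real m + 1) * (2 * real m + 3))"
  proof -
    have p: "real m + 2 > 0" "2 * real m + 1 > 0" "2 * real m + 3 > 0" "real m + 3 > 0" by auto
    have B: "(2 * (2 * real m + 1)) / (real m + 2) * (2 * (2 * real (Suc m) + 1)) / (real (Suc m) + 2)
       = (4 * (2 * real m + 1) * (2 * real m + 3)) / ((real m + 2) * (real m + 3))"
      by (simp add: field_simps)
    have g: "\<And>a b c X :: real. b \<noteq> 0 \<Longrightarrow> c \<noteq> 0 \<Longrightarrow> X \<noteq> 0 \<Longrightarrow> a/b / (X/(b*c)) = a*c/X"
      by (simp add: field_simps)
    show ?thesis unfolding B by (rule g) (use p in auto)
  qed
  have l: "(cr (Suc m) + cr m) / cr (Suc (Suc m)) = (5 * real m + 4) * (real m + 3) / (4 * (2 * real m + 1) * (2 * real m + 3))"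
    unfolding num den by (subst mult_divide_mult_cancel_left) (use c0 AB in auto)
  have n1: "5 * real (Suc m) ^ 2 + 9 * real (Suc m) - 2 = (5 * real m + 4) * (real m + 3)"
    by (simp add: power2_eq_square algebra_simps)
  have n2: "16 * real (Suc m) ^ 2 - 4 = 4 * (2 * real m + 1) * (2 * real m + 3)"
    by (simp add: power2_eq_square algebra_simps)
  have r: "(5 * real (Suc m) ^ 2 + 9 * real (Suc m) - 2) / (16 * real (Suc m) ^ 2 - 4)
     = (5 * real m + 4) * (real m + 3) / (4 * (2 * real m + 1) * (2 * real m + 3))"
    unfolding n1 n2 ..
  show ?thesis unfolding l r ..
qed



theorem mainTheorem17:
  fixes p n :: nat
  assumes "prime p" and "n \<ge> 1"
  shows "(\<forall>T. transfer_system n T \<longrightarrow>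
            (lesser_simply_paired n T \<longleftrightarrow>
               connected_ts n T \<or>
               (card (components n T) = 2 \<and> component_of n T 0 = {0})))
       \<and> card {T. transfer_system n T \<and> lesser_simply_paired n T} = catalan n + catalan (n - 1)
       \<and> real (card {T. transfer_system n T \<and> lesser_simply_paired n T})
           = real ((5 * n - 1) * fact (2 * n - 2)) / real (fact (n - 1) * fact (n + 1))
       \<and> real (card {T. transfer_system n T \<and> lesser_simply_paired n T})
           / real (card {T. transfer_system n T})
           = (5 * real n ^ 2 + 9 * real n - 2) / (16 * real n ^ 2 - 4)"
proof -
  have n1: "1 \<le> n" using assms(2) .
  have P1: "\<forall>T. transfer_system n T \<longrightarrow>
            (lesser_simply_paired n T \<longleftrightarrow>
               connected_ts n T \<or>
               (card (components n T) = 2 \<and> component_of n T 0 = {0}))"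
  proof (intro allI impI)
    fix T assume ts: "transfer_system n T"
    interpret tsys n T by (rule tsys.intro[OF ts])
    show "lesser_simply_paired n T \<longleftrightarrow> connected_ts n T \<or> (card (components n T) = 2 \<and> component_of n T 0 = {0})"
      using lsp_iff comp_iff[OF n1] by simp
  qed
  have LS: "{T. transfer_system n T \<and> lesser_simply_paired n T} =
     {T. tsR 0 (Suc n) T \<and> (0, 0+n) \<in> T} \<union> {T. tsR 0 (Suc n) T \<and> (0, 0+n) \<notin> T \<and> (0+1, 0+n) \<in> T}"
  proof (rule set_eqI)
    fix T
    show "T \<in> {T. transfer_system n T \<and> lesser_simply_paired n T} \<longleftrightarrow>
      T \<in> {T. tsR 0 (Suc n) T \<and> (0, 0+n) \<in> T} \<union> {T. tsR 0 (Suc n) T \<and> (0, 0+n) \<notin> T \<and> (0+1, 0+n) \<in> T}"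
    proof (cases "transfer_system n T")
      case True
      interpret tsys n T by (rule tsys.intro[OF True])
      have "lesser_simply_paired n T \<longleftrightarrow> (0,n) \<in> T \<or> (1,n) \<in> T"
        using lsp_iff cond_iff[OF n1] by simp
      then show ?thesis using True ts_iff_tsR by auto
    next
      case False
      then show ?thesis using ts_iff_tsR by auto
    qed
  qed
  have cardLS: "card {T. transfer_system n T \<and> lesser_simply_paired n T} = catalan n + catalan (n - 1)"
  proof -
    have f1: "finite {T. tsR 0 (Suc n) T \<and> (0, 0+n) \<in> T}"
      by (rule finite_subset[OF _ tsR_finite[of 0 "Suc n"]]) auto
    have f2: "finite {T. tsR 0 (Suc n) T \<and> (0, 0+n) \<notin> T \<and> (0+1, 0+n) \<in> T}"
      by (rule finite_subset[OF _ tsR_finite[of 0 "Suc n"]]) auto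
    have d: "{T. tsR 0 (Suc n) T \<and> (0, 0+n) \<in> T} \<inter> {T. tsR 0 (Suc n) T \<and> (0, 0+n) \<notin> T \<and> (0+1, 0+n) \<in> T} = {}"
      by auto
    show ?thesis unfolding LS card_Un_disjoint[OF f1 f2 d] card_top card_H[OF n1] ..
  qed
  have cardT: "card {T. transfer_system n T} = catalan (Suc n)"
    using card_tsR[of 0 "Suc n"] ts_iff_tsR by simp
  obtain m where m: "n = Suc m" using n1 by (cases n) auto
  have a1: "cr n + cr (n - 1) = real ((5 * n - 1) * fact (2 * n - 2)) / real (fact (n - 1) * fact (n + 1))"
    unfolding m using arith1[of m] by (simp only: diff_Suc_1)
  have a2: "(cr n + cr (n - 1)) / cr (Suc n) = (5 * real n ^ 2 + 9 * real n - 2) / (16 * real n ^ 2 - 4)"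
    unfolding m using arith2[of m] by (simp only: diff_Suc_1)
  have rl: "real (card {T. transfer_system n T \<and> lesser_simply_paired n T}) = cr n + cr (n - 1)"
    unfolding cardLS by (simp add: catalan_real)
  have P3: "real (card {T. transfer_system n T \<and> lesser_simply_paired n T})
           = real ((5 * n - 1) * fact (2 * n - 2)) / real (fact (n - 1) * fact (n + 1))"
    using rl a1 by simp
  have P4: "real (card {T. transfer_system n T \<and> lesser_simply_paired n T})
           / real (card {T. transfer_system n T})
           = (5 * real n ^ 2 + 9 * real n - 2) / (16 * real n ^ 2 - 4)"
    unfolding rl cardT catalan_real using a2 .
  show ?thesis using P1 cardLS P3 P4 by blast
qed


end
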